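(* Let $H_n=\sum_{i=1}^{M(n)}\mathcal J_i h_i$ be a random commuting local Hamiltonian whose coefficients $\mathcal J_i$ are i.i.d. $(R,\delta)$-digitalizations of $\mathcal N(0,1)$, and let $\{\lambda_k\}$ be its eigenvalues indexed by the common eigenbasis. Take $R=\mathrm{poly}(n)$, $\delta=O(1/(e^{\beta n}M(n)))$, and $\beta>0$ sufficiently large. Then $$\Pr\Big(\min_{k\neq k'}|\lambda_k-\lambda_{k'}|\le 2^{-\beta n}\Big)=\mathrm{negl}(n),$$ and the digitalization uses $\mathrm{poly}(n)$ bits in total.
   Context: Fix $d\ge1$ and a finite set $\mathcal T$ of Hermitian operators on at most $d$ qubits, each with non-degenerate spectrum. For each $n$, choose $M(n)=\Theta(n)$ templates and supports so that $h_i=(h^{(\alpha_i)})_{S_i}\otimes I_{[n]\setminus S_i}$ form a complete set of commuting observables. This means they pairwise commute and the tuple of their eigenvalues on a common eigenvector uniquely determines that eigenvector. $(R,\delta)$-digitalization, with $R/\delta$ an odd integer: a Gaussian $\mathcal J$ is mapped to $k\delta$ when $\mathcal J\in((k-\frac12)\delta,(k+\frac12)\delta]$, to $-R$ when $\mathcal J\le-R+\delta/2$, and to $R$ when $\mathcal J>R-\delta/2$. $\mathrm{negl}(n)$ denotes a function smaller than any inverse polynomial. *)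

theory Defs
  imports "HOL-Probability.Probability" "HOL-Library.Landau_Symbols"
begin

text \<open>Operators on N-dimensional spaces are represented as functions
  nat => nat => complex, of which only the entries with indices < N matter;
  vectors as nat => complex, only entries < N matter.
  The n-qubit space has N = 2^n, basis index x, and bit q of x is the state of qubit q.\<close>

type_synonym cmat = "nat \<Rightarrow> nat \<Rightarrow> complex"
type_synonym cvec = "nat \<Rightarrow> complex"

definition bitof :: "nat \<Rightarrow> nat \<Rightarrow> nat" where
  "bitof x q = (x div 2 ^ q) mod 2"

definition mmul :: "nat \<Rightarrow> cmat \<Rightarrow> cmat \<Rightarrow> cmat" where
  "mmul N A B = (\<lambda>i j. \<Sum>k<N. A i k * B k j)"

definition mvec :: "nat \<Rightarrow> cmat \<Rightarrow> cvec \<Rightarrow> cvec" where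
  "mvec N A v = (\<lambda>i. \<Sum>k<N. A i k * v k)"

definition mat_eq :: "nat \<Rightarrow> cmat \<Rightarrow> cmat \<Rightarrow> bool" where
  "mat_eq N A B \<longleftrightarrow> (\<forall>i<N. \<forall>j<N. A i j = B i j)"

definition hermitian_op :: "nat \<Rightarrow> cmat \<Rightarrow> bool" where
  "hermitian_op N A \<longleftrightarrow> (\<forall>i<N. \<forall>j<N. A i j = cnj (A j i))"

definition eigvec :: "nat \<Rightarrow> cmat \<Rightarrow> complex \<Rightarrow> cvec \<Rightarrow> bool" where
  "eigvec N A a v \<longleftrightarrow> (\<exists>i<N. v i \<noteq> 0) \<and> (\<forall>i<N. mvec N A v i = a * v i)"

definition parallel :: "nat \<Rightarrow> cvec \<Rightarrow> cvec \<Rightarrow> bool" where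
  "parallel N v w \<longleftrightarrow> (\<exists>c. \<forall>i<N. w i = c * v i)"

definition nondegenerate :: "nat \<Rightarrow> cmat \<Rightarrow> bool" where
  "nondegenerate N A \<longleftrightarrow> (\<forall>a v w. eigvec N A a v \<and> eigvec N A a w \<longrightarrow> parallel N v w)"

text \<open>Local embedding (A)_S tensor I on n qubits: S is the list of (distinct) qubits on which
  the template A (acting on length S qubits) acts; qubit S!t is the t-th tensor factor of A.\<close>
definition restr :: "nat list \<Rightarrow> nat \<Rightarrow> nat" where
  "restr S x = (\<Sum>t<length S. bitof x (S ! t) * 2 ^ t)"

definition embed :: "nat \<Rightarrow> nat list \<Rightarrow> cmat \<Rightarrow> cmat" where
  "embed n S A = (\<lambda>x y. if (\<forall>q<n. q \<notin> set S \<longrightarrow> bitof x q = bitof y q)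
                         then A (restr S x) (restr S y) else 0)"

definition common_eigvec :: "nat \<Rightarrow> nat \<Rightarrow> (nat \<Rightarrow> cmat) \<Rightarrow> cvec \<Rightarrow> bool" where
  "common_eigvec N M h v \<longleftrightarrow> (\<exists>a. \<forall>i<M. eigvec N (h i) (a i) v)"

definition CSCO :: "nat \<Rightarrow> nat \<Rightarrow> (nat \<Rightarrow> cmat) \<Rightarrow> bool" where
  "CSCO N M h \<longleftrightarrow>
     (\<forall>i<M. \<forall>j<M. mat_eq N (mmul N (h i) (h j)) (mmul N (h j) (h i))) \<and>
     (\<forall>a v w. (\<forall>i<M. eigvec N (h i) (a i) v) \<and> (\<forall>i<M. eigvec N (h i) (a i) w)
              \<longrightarrow> parallel N v w)"

definition digitalize :: "real \<Rightarrow> real \<Rightarrow> real \<Rightarrow> real" where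
  "digitalize R \<delta> x =
     (if x \<le> - R + \<delta> / 2 then - R
      else if x > R - \<delta> / 2 then R
      else \<delta> * of_int \<lceil>x / \<delta> - 1 / 2\<rceil>)"

definition dig_gauss :: "real \<Rightarrow> real \<Rightarrow> real measure" where
  "dig_gauss R \<delta> = distr (density lborel std_normal_density) borel (digitalize R \<delta>)"

text \<open>Number of bits used to store M digitalized coefficients
  (each takes one of 2R/delta + 1 values).\<close>
definition digit_bits :: "nat \<Rightarrow> real \<Rightarrow> real \<Rightarrow> real" where
  "digit_bits M R \<delta> = real M * of_int \<lceil>log 2 (2 * R / \<delta> + 1)\<rceil>"

definition negl :: "(nat \<Rightarrow> real) \<Rightarrow> bool" where
  "negl f \<longleftrightarrow> (\<forall>k::nat. eventually (\<lambda>n. real n ^ k * \<bar>f n\<bar> < 1) at_top)"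

definition poly_bounded :: "(nat \<Rightarrow> real) \<Rightarrow> bool" where
  "poly_bounded f \<longleftrightarrow> (\<exists>k::nat. f \<in> O(\<lambda>n. real n ^ k))"

definition is_poly_growth :: "(nat \<Rightarrow> real) \<Rightarrow> bool" where
  "is_poly_growth f \<longleftrightarrow> (\<exists>c>0. \<exists>C. eventually (\<lambda>n. real n powr c \<le> f n \<and> f n \<le> real n powr C) at_top)"

definition hamiltonian :: "nat \<Rightarrow> (nat \<Rightarrow> cmat) \<Rightarrow> (nat \<Rightarrow> real) \<Rightarrow> cmat" where
  "hamiltonian M h J = (\<lambda>x y. \<Sum>i<M. complex_of_real (J i) * h i x y)"

text \<open>Gap event: two eigenvalues of H, attached to two distinct (non-parallel) elements of
  the common eigenbasis of the h_i, are within eps.\<close>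
definition small_gap :: "nat \<Rightarrow> nat \<Rightarrow> (nat \<Rightarrow> cmat) \<Rightarrow> real \<Rightarrow> (nat \<Rightarrow> real) \<Rightarrow> bool" where
  "small_gap N M h eps J \<longleftrightarrow>
     (\<exists>v w \<mu> \<nu>. common_eigvec N M h v \<and> common_eigvec N M h w \<and> \<not> parallel N v w \<and>
        eigvec N (hamiltonian M h J) \<mu> v \<and> eigvec N (hamiltonian M h J) \<nu> w \<and>
        cmod (\<mu> - \<nu>) \<le> eps)"

end

theory Submission
  imports Defs "Jordan_Normal_Form.Char_Poly" "HOL-Real_Asymp.Real_Asymp"
begin


lemma eigvec_finite: "finite {a. \<exists>u. eigvec N A a u}"
proof -
  define B where "B = mat N N (\<lambda>(i,j). A i j)"
  have B: "B \<in> carrier_mat N N" unfolding B_def by simp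
  have "{a. \<exists>u. eigvec N A a u} \<subseteq> {a. poly (char_poly B) a = 0}"
  proof
    fix a assume "a \<in> {a. \<exists>u. eigvec N A a u}"
    then obtain u where u: "eigvec N A a u" by blast
    have "eigenvector B (vec N u) a"
      unfolding eigenvector_def
    proof (intro conjI)
      show "vec N u \<in> carrier_vec (dim_row B)" using B by simp
      show "vec N u \<noteq> 0\<^sub>v (dim_row B)"
      proof
        assume h: "vec N u = 0\<^sub>v (dim_row B)"
        from u obtain i where "i < N" "u i \<noteq> 0" unfolding eigvec_def by blast
        then show False using arg_cong[OF h, of "\<lambda>v. v $ i"] B by simp
      qed
      show "B *\<^sub>v vec N u = a \<cdot>\<^sub>v vec N u"
      proof (rule eq_vecI)
        fix i assume "i < dim_vec (a \<cdot>\<^sub>v vec N u)"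
        then have i: "i < N" by simp
        have "(B *\<^sub>v vec N u) $ i = (\<Sum>k<N. A i k * u k)"
          using i B unfolding B_def
          by (simp add: scalar_prod_def row_def atLeast0LessThan)
        also have "\<dots> = a * u i" using u i unfolding eigvec_def mvec_def by simp
        finally show "(B *\<^sub>v vec N u) $ i = (a \<cdot>\<^sub>v vec N u) $ i" using i by simp
      qed (use B in simp)
    qed
    then have "eigenvalue B a" unfolding eigenvalue_def by blast
    then show "a \<in> {a. poly (char_poly B) a = 0}" using eigenvalue_root_char_poly[OF B] by simp
  qed
  moreover have "char_poly B \<noteq> 0"
    using degree_monic_char_poly[OF B] by auto
  ultimately show ?thesis using poly_roots_finite finite_subset by blast
qed



lemma bitof_bit: "bitof x q = of_bool (bit x q)"
  unfolding bitof_def bit_iff_odd by (cases "even (x div 2 ^ q)") (auto simp: even_iff_mod_2_eq_zero odd_iff_mod_2_eq_one)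

lemma bitof_eq_iff: "bitof x q = bitof z q \<longleftrightarrow> bit x q = bit z q"
  by (simp add: bitof_bit)

lemma restr_horner: "restr S z = horner_sum of_bool 2 (map (\<lambda>t. bit z (S!t)) [0..<length S])"
  unfolding restr_def horner_sum_eq_sum by (simp add: bitof_bit atLeast0LessThan)

lemma bit_restr: "bit (restr S z) t \<longleftrightarrow> t < length S \<and> bit z (S!t)"
  unfolding restr_horner bit_horner_sum_bit_iff by auto

lemma restr_less: "restr S z < 2 ^ length S"
  unfolding restr_horner using horner_sum_of_bool_2_less[of "map (\<lambda>t. bit z (S!t)) [0..<length S]"] by simp

lemma nat_less_pow_bit: "(z::nat) < 2 ^ n \<Longrightarrow> n \<le> q \<Longrightarrow> \<not> bit z q"
proof -
  assume "z < 2 ^ n" "n \<le> q"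
  then have "z < 2 ^ q" using power_increasing[of n q "2::nat"] by linarith
  then have "z div 2 ^ q = 0" by simp
  then show ?thesis by (simp add: bit_iff_odd)
qed

definition sidx :: "nat list \<Rightarrow> nat \<Rightarrow> nat" where
  "sidx S q = (THE t. t < length S \<and> S ! t = q)"

lemma sidx_nth: "distinct S \<Longrightarrow> t < length S \<Longrightarrow> sidx S (S ! t) = t"
  unfolding sidx_def by (rule the_equality) (auto simp: nth_eq_iff_index_eq)

lemma sidx_in: "distinct S \<Longrightarrow> q \<in> set S \<Longrightarrow> sidx S q < length S \<and> S ! sidx S q = q"
  by (metis in_set_conv_nth sidx_nth)

lemma embed_eig:
  assumes dist: "distinct S" and sub: "set S \<subseteq> {..<n}"
    and ev: "eigvec (2 ^ n) (embed n S A) a v"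
  shows "\<exists>u. eigvec (2 ^ length S) A a u"
proof -
  define m where "m = length S"
  define x where "x = (SOME x. x < 2 ^ n \<and> v x \<noteq> 0)"
  have "\<exists>x. x < 2 ^ n \<and> v x \<noteq> 0" using ev unfolding eigvec_def by blast
  then have x: "x < 2 ^ n" "v x \<noteq> 0" unfolding x_def by (metis (mono_tags, lifting) someI_ex)+
  define y where "y = (\<lambda>r::nat. horner_sum of_bool 2 (map (\<lambda>q. if q \<in> set S then bit r (sidx S q)
              else bit x q) [0..<n]) :: nat)"
  have bity: "bit (y r) q \<longleftrightarrow> q < n \<and> (if q \<in> set S then bit r (sidx S q) else bit x q)" for r q
    unfolding y_def bit_horner_sum_bit_iff by auto
  define agr where "agr = (\<lambda>(z::nat) (z'::nat). \<forall>q<n. q \<notin> set S \<longrightarrow> bit z q = bit z' q)"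
  define Z where "Z = {z. z < 2 ^ n \<and> agr x z}"
  have yless: "y r < 2 ^ n" for r
    unfolding y_def using horner_sum_of_bool_2_less[of "map (\<lambda>q. if q \<in> set S then bit r (sidx S q)
              else bit x q) [0..<n]"] by simp
  have restr_y: "restr S (y r) = r" if "r < 2 ^ m" for r
  proof (rule bit_eqI)
    fix t
    show "bit (restr S (y r)) t \<longleftrightarrow> bit r t"
    proof (cases "t < m")
      case True
      then have "S ! t \<in> set S" using m_def by simp
      then have "S ! t < n" using sub by auto
      note this \<open>S ! t \<in> set S\<close>
      then show ?thesis using True dist by (simp add: bit_restr bity m_def sidx_nth)
    next
      case False
      then show ?thesis using nat_less_pow_bit[OF that] by (simp add: bit_restr m_def)
    qed
  qed
  have y_restr: "y (restr S z) = z" if "z \<in> Z" for z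
  proof (rule bit_eqI)
    fix q
    have z: "z < 2 ^ n" "agr x z" using that Z_def by auto
    show "bit (y (restr S z)) q \<longleftrightarrow> bit z q"
    proof (cases "q < n")
      case True
      then show ?thesis using z(2) unfolding agr_def
        using sidx_in[OF dist] by (auto simp: bity bit_restr)
    next
      case False
      then show ?thesis using nat_less_pow_bit[OF z(1)] by (simp add: bity)
    qed
  qed
  have yZ: "y r \<in> Z" for r
    unfolding Z_def agr_def using yless by (auto simp: bity)
  have bij: "bij_betw y {..<2 ^ m} Z"
    by (rule bij_betw_byWitness[where f'="restr S"])
       (use restr_y y_restr yZ restr_less in \<open>auto simp: m_def\<close>)
  have finZ: "finite Z" unfolding Z_def by simp
  have agr_trans: "agr x z \<Longrightarrow> agr z w \<longleftrightarrow> agr x w" for z w unfolding agr_def by auto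
  have key: "mvec (2 ^ n) (embed n S A) v z = (\<Sum>r<2 ^ m. A (restr S z) r * v (y r))"
    if "z \<in> Z" for z
  proof -
    have "mvec (2 ^ n) (embed n S A) v z =
       (\<Sum>w<2 ^ n. (if w \<in> Z then A (restr S z) (restr S w) * v w else 0))"
      unfolding mvec_def embed_def
    proof (rule sum.cong[OF refl])
      fix w assume "w \<in> {..<(2::nat) ^ n}"
      then have "w < 2 ^ n" by simp
      moreover have "(\<forall>q<n. q \<notin> set S \<longrightarrow> bitof z q = bitof w q) = agr z w"
        unfolding agr_def bitof_eq_iff ..
      ultimately show "(if \<forall>q<n. q \<notin> set S \<longrightarrow> bitof z q = bitof w q then A (restr S z) (restr S w) else 0) * v w =
         (if w \<in> Z then A (restr S z) (restr S w) * v w else 0)"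
        using agr_trans[of z w] that unfolding Z_def by auto
    qed
    also have "\<dots> = (\<Sum>w\<in>Z. A (restr S z) (restr S w) * v w)"
      by (subst sum.inter_restrict[symmetric]) (auto simp: Z_def intro!: sum.cong)
    also have "\<dots> = (\<Sum>r<2 ^ m. A (restr S z) (restr S (y r)) * v (y r))"
      using sum.reindex_bij_betw[OF bij, of "\<lambda>w. A (restr S z) (restr S w) * v w"] by simp
    also have "\<dots> = (\<Sum>r<2 ^ m. A (restr S z) r * v (y r))"
      using restr_y by (auto intro!: sum.cong)
    finally show ?thesis .
  qed
  have "eigvec (2 ^ m) A a (\<lambda>r. v (y r))"
    unfolding eigvec_def
  proof (intro conjI allI impI)
    have "x \<in> Z" unfolding Z_def agr_def using x by auto
    then have "v (y (restr S x)) \<noteq> 0" using y_restr x by simp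
    then show "\<exists>i<2 ^ m. v (y i) \<noteq> 0" using restr_less[of S x] m_def by blast
  next
    fix s :: nat assume s: "s < 2 ^ m"
    have "mvec (2 ^ m) A (\<lambda>r. v (y r)) s = (\<Sum>r<2 ^ m. A (restr S (y s)) r * v (y r))"
      unfolding mvec_def using restr_y[OF s] by simp
    also have "\<dots> = mvec (2 ^ n) (embed n S A) v (y s)" using key[OF yZ] by simp
    also have "\<dots> = a * v (y s)" using ev yless unfolding eigvec_def by blast
    finally show "mvec (2 ^ m) A (\<lambda>r. v (y r)) s = a * v (y s)" .
  qed
  then show ?thesis unfolding m_def by blast
qed



lemma interval_aux:
  fixes x0 t \<epsilon> :: real assumes "x0 \<noteq> 0"
  shows "\<exists>lo. {y. \<bar>y * x0 + t\<bar> \<le> \<epsilon>} \<subseteq> {lo..lo + 2 * \<epsilon> / \<bar>x0\<bar>}"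
proof (cases "x0 > 0")
  case True
  show ?thesis
  proof (intro exI subsetI)
    fix y assume "y \<in> {y. \<bar>y * x0 + t\<bar> \<le> \<epsilon>}"
    then have "-\<epsilon> - t \<le> y * x0" "y * x0 \<le> \<epsilon> - t" by auto
    moreover have "(-\<epsilon> - t) / x0 + 2 * \<epsilon> / \<bar>x0\<bar> = (\<epsilon> - t) / x0"
      using True by (simp add: field_simps)
    ultimately show "y \<in> {(-\<epsilon> - t) / x0 .. (-\<epsilon> - t) / x0 + 2 * \<epsilon> / \<bar>x0\<bar>}"
      using True by (simp add: pos_divide_le_eq pos_le_divide_eq)
  qed
next
  case False
  then have neg: "x0 < 0" using assms by simp
  show ?thesis
  proof (intro exI subsetI)
    fix y assume "y \<in> {y. \<bar>y * x0 + t\<bar> \<le> \<epsilon>}"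
    then have "-\<epsilon> - t \<le> y * x0" "y * x0 \<le> \<epsilon> - t" by auto
    moreover have "(\<epsilon> - t) / x0 + 2 * \<epsilon> / \<bar>x0\<bar> = (-\<epsilon> - t) / x0"
      using neg by (simp add: field_simps)
    ultimately show "y \<in> {(\<epsilon> - t) / x0 .. (\<epsilon> - t) / x0 + 2 * \<epsilon> / \<bar>x0\<bar>}"
      using neg by (simp add: neg_divide_le_eq neg_le_divide_eq)
  qed
qed

lemma pair_meas:
  fixes \<mu> :: "real measure" and x :: "nat \<Rightarrow> real"
  assumes sets_mu: "sets \<mu> = sets borel" and i0: "i0 < M" and B: "B \<in> sets borel"
  shows "{J \<in> space (PiM {..<M} (\<lambda>_. \<mu>)). J i0 \<notin> B \<and> \<bar>\<Sum>i<M. J i * x i\<bar> \<le> \<epsilon>}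
          \<in> sets (PiM {..<M} (\<lambda>_. \<mu>))"
proof -
  have ins: "insert i0 ({..<M} - {i0}) = {..<M}" using i0 by auto
  have [measurable_cong]: "sets \<mu> = sets borel" by (rule sets_mu)
  have [measurable]: "B \<in> sets borel" by fact
  have "{J \<in> space (PiM (insert i0 ({..<M} - {i0})) (\<lambda>_. \<mu>)). J i0 \<notin> B \<and>
      \<bar>\<Sum>i\<in>insert i0 ({..<M} - {i0}). J i * x i\<bar> \<le> \<epsilon>} \<in> sets (PiM (insert i0 ({..<M} - {i0})) (\<lambda>_. \<mu>))"
    by measurable
  then show ?thesis by (simp only: ins)
qed

lemma pair_bound:
  fixes \<mu> :: "real measure" and x :: "nat \<Rightarrow> real"
  assumes mu: "prob_space \<mu>" and sets_mu: "sets \<mu> = sets borel"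
    and i0: "i0 < M" and B: "B \<in> sets borel" and x0: "x i0 \<noteq> 0"
    and bound: "\<And>lo. emeasure \<mu> ({lo..lo + 2 * \<epsilon> / \<bar>x i0\<bar>} - B) \<le> p"
  shows "emeasure (PiM {..<M} (\<lambda>_. \<mu>))
           {J \<in> space (PiM {..<M} (\<lambda>_. \<mu>)). J i0 \<notin> B \<and> \<bar>\<Sum>i<M. J i * x i\<bar> \<le> \<epsilon>} \<le> p"
proof -
  interpret mu: prob_space \<mu> by fact
  define I where "I = {..<M} - {i0}"
  have ins: "insert i0 I = {..<M}" using i0 I_def by auto
  have i0I: "i0 \<notin> I" unfolding I_def by simp
  have finI: "finite I" unfolding I_def by simp
  define PI where "PI = PiM I (\<lambda>_. \<mu>)"
  interpret PI: prob_space PI unfolding PI_def by (intro prob_space_PiM mu)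
  interpret pair_sigma_finite \<mu> PI by unfold_locales
  have space_mu: "space \<mu> = UNIV" using sets_eq_imp_space_eq[OF sets_mu] by simp
  have meas_mu [measurable_cong]: "sets \<mu> = sets borel" by (rule sets_mu)
  define A where "A = {J \<in> space (PiM (insert i0 I) (\<lambda>_. \<mu>)). J i0 \<notin> B \<and> \<bar>\<Sum>i\<in>insert i0 I. J i * x i\<bar> \<le> \<epsilon>}"
  have [measurable]: "B \<in> sets borel" by fact
  have Ameas: "A \<in> sets (PiM (insert i0 I) (\<lambda>_. \<mu>))"
    unfolding A_def by measurable
  have dist: "distr (\<mu> \<Otimes>\<^sub>M PI) (PiM (insert i0 I) (\<lambda>_. \<mu>)) (\<lambda>(y, X). X(i0 := y)) = PiM (insert i0 I) (\<lambda>_. \<mu>)"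
    unfolding PI_def by (rule distr_pair_PiM_eq_PiM) (auto intro: mu)
  define A2 where "A2 = {z \<in> space (\<mu> \<Otimes>\<^sub>M PI). fst z \<notin> B \<and> \<bar>fst z * x i0 + (\<Sum>i\<in>I. snd z i * x i)\<bar> \<le> \<epsilon>}"
  have pre: "(\<lambda>(y, X). X(i0 := y)) -` A \<inter> space (\<mu> \<Otimes>\<^sub>M PI) = A2"
  proof -
    have sumeq: "(\<Sum>i\<in>insert i0 I. (X(i0 := y)) i * x i) = y * x i0 + (\<Sum>i\<in>I. X i * x i)" for X y
      using i0I finI by (simp add: sum.insert) (intro sum.cong; auto)
    have sp: "X(i0 := y) \<in> space (PiM (insert i0 I) (\<lambda>_. \<mu>))" if "X \<in> space PI" for X y
      using that unfolding PI_def by (auto simp: space_PiM space_mu PiE_iff)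
    show ?thesis unfolding A_def A2_def using sp sumeq
      by (auto simp: space_pair_measure)
  qed
  have "emeasure (PiM (insert i0 I) (\<lambda>_. \<mu>)) A = emeasure (\<mu> \<Otimes>\<^sub>M PI) A2"
    using Ameas unfolding pre[symmetric]
    by (subst dist[symmetric]) (simp add: emeasure_distr PI_def)
  also have "\<dots> = (\<integral>\<^sup>+X. emeasure \<mu> ((\<lambda>y. (y, X)) -` A2) \<partial>PI)"
  proof (rule emeasure_pair_measure_alt2)
    show "A2 \<in> sets (\<mu> \<Otimes>\<^sub>M PI)" unfolding A2_def PI_def by measurable
  qed
  also have "\<dots> \<le> (\<integral>\<^sup>+X. p \<partial>PI)"
  proof (rule nn_integral_mono)
    fix X assume X: "X \<in> space PI"
    define t where "t = (\<Sum>i\<in>I. X i * x i)"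
    obtain lo where lo: "{y. \<bar>y * x i0 + t\<bar> \<le> \<epsilon>} \<subseteq> {lo..lo + 2 * \<epsilon> / \<bar>x i0\<bar>}"
      using interval_aux[OF x0] by blast
    have "(\<lambda>y. (y, X)) -` A2 \<subseteq> {lo..lo + 2 * \<epsilon> / \<bar>x i0\<bar>} - B"
      using lo X unfolding A2_def t_def by (auto simp: space_pair_measure)
    then have "emeasure \<mu> ((\<lambda>y. (y, X)) -` A2) \<le> emeasure \<mu> ({lo..lo + 2 * \<epsilon> / \<bar>x i0\<bar>} - B)"
      by (intro emeasure_mono) (use B sets_mu in auto)
    also have "\<dots> \<le> p" by (rule bound)
    finally show "emeasure \<mu> ((\<lambda>y. (y, X)) -` A2) \<le> p" .
  qed
  also have "\<dots> = p" using PI.emeasure_space_1 by simp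
  finally show ?thesis unfolding A_def ins .
qed



abbreviation gaussM :: "real measure" where "gaussM \<equiv> density lborel std_normal_density"

lemma G_prob: "prob_space gaussM" by (rule prob_space_normal_density) simp

lemma digitalize_meas[measurable]: "digitalize R \<delta> \<in> borel_measurable borel"
  unfolding digitalize_def by measurable

lemma dig_prob: "prob_space (dig_gauss R \<delta>)"
  unfolding dig_gauss_def by (intro prob_space.prob_space_distr G_prob) simp

lemma dig_sets: "sets (dig_gauss R \<delta>) = sets borel"
  unfolding dig_gauss_def by simp

lemma dig_edge:
  assumes R: "R > 0" and d: "\<delta> > 0" and e: "digitalize R \<delta> x \<in> {R, -R}"
  shows "R - \<delta> / 2 \<le> \<bar>x\<bar>"
proof (rule ccontr)
  assume "\<not> R - \<delta> / 2 \<le> \<bar>x\<bar>"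
  then have x1: "\<not> x \<le> - R + \<delta> / 2" and x2: "\<not> x > R - \<delta> / 2" by auto
  define c where "c = \<lceil>x / \<delta> - 1 / 2\<rceil>"
  have "digitalize R \<delta> x = \<delta> * of_int c" using x1 x2 unfolding digitalize_def c_def by simp
  moreover have "of_int c < x / \<delta> + 1 / 2" "x / \<delta> - 1/2 \<le> of_int c" unfolding c_def
    by linarith+
  moreover have "x / \<delta> + 1 / 2 \<le> R / \<delta>"
  proof -
    have "x + \<delta> / 2 \<le> R" using x2 by simp
    then have "(x + \<delta> / 2) / \<delta> \<le> R / \<delta>" using d by (intro divide_right_mono) auto
    then show ?thesis using d by (simp add: add_divide_distrib)
  qed
  moreover have "- R / \<delta> < x / \<delta> - 1/2"
  proof -
    have "- R < x - \<delta> / 2" using x1 by simp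
    then have "(- R) / \<delta> < (x - \<delta> / 2) / \<delta>" using d by (intro divide_strict_right_mono) auto
    then show ?thesis using d by (simp add: diff_divide_distrib)
  qed
  ultimately have "of_int c < R / \<delta>" "- R / \<delta> < of_int c" by linarith+
  then have "of_int c * \<delta> < R" "(- R) / \<delta> < of_int c" using d
    by (simp_all add: pos_less_divide_eq)
  then have "of_int c * \<delta> < R" "- R < of_int c * \<delta>" using d
    by (simp_all only: pos_divide_less_eq)
  then have "\<delta> * of_int c < R" "- R < \<delta> * of_int c" by (simp_all add: mult.commute)
  then show False using e \<open>digitalize R \<delta> x = \<delta> * of_int c\<close> by auto
qed

lemma dig_close:
  assumes R: "R > 0" and d: "\<delta> > 0" and e: "digitalize R \<delta> x \<notin> {R, -R}"
  shows "\<bar>digitalize R \<delta> x - x\<bar> \<le> \<delta> / 2"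
proof -
  have x1: "\<not> x \<le> - R + \<delta> / 2" and x2: "\<not> x > R - \<delta> / 2"
    using e unfolding digitalize_def by (auto split: if_splits)
  define c where "c = \<lceil>x / \<delta> - 1 / 2\<rceil>"
  have dx: "digitalize R \<delta> x = \<delta> * of_int c" using x1 x2 unfolding digitalize_def c_def by simp
  have "of_int c < x / \<delta> + 1 / 2" "x / \<delta> - 1/2 \<le> of_int c" unfolding c_def
    by linarith+
  then have "\<delta> * of_int c < x + \<delta> / 2" "x - \<delta> / 2 \<le> \<delta> * of_int c" using d
    by (simp_all add: field_simps)
  then show ?thesis unfolding dx abs_le_iff by linarith
qed

lemma std_normal_le1: "std_normal_density x \<le> 1"
proof -
  have "1 / sqrt (2 * pi) \<le> 1" using pi_gt3 by (simp add: divide_le_eq_1 real_le_rsqrt)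
  moreover have "exp (- x\<^sup>2 / 2) \<le> 1" by simp
  ultimately show ?thesis unfolding std_normal_density_def
    by (metis mult_le_one exp_ge_zero less_eq_real_def zero_le_divide_1_iff real_sqrt_ge_zero zero_le_mult_iff pi_ge_zero mult_nonneg_nonneg zero_le_numeral)
qed

lemma G_Icc: "a \<le> b \<Longrightarrow> emeasure gaussM {a..b} \<le> ennreal (b - a)"
proof -
  assume ab: "a \<le> b"
  have "emeasure gaussM {a..b} = (\<integral>\<^sup>+ x. ennreal (std_normal_density x) * indicator {a..b} x \<partial>lborel)"
    by (subst emeasure_density) auto
  also have "\<dots> \<le> (\<integral>\<^sup>+ x. indicator {a..b} x \<partial>lborel)"
    by (intro nn_integral_mono) (auto simp: indicator_def std_normal_le1)
  also have "\<dots> = ennreal (b - a)" using ab by simp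
  finally show ?thesis .
qed

lemma dig_interval:
  assumes R: "R > 0" and d: "\<delta> > 0" and ab: "a \<le> b"
  shows "emeasure (dig_gauss R \<delta>) ({a..b} - {R, -R}) \<le> ennreal (b - a + \<delta>)"
proof -
  have "emeasure (dig_gauss R \<delta>) ({a..b} - {R, -R}) = emeasure gaussM (digitalize R \<delta> -` ({a..b} - {R, -R}))"
    unfolding dig_gauss_def by (subst emeasure_distr) auto
  also have "\<dots> \<le> emeasure gaussM {a - \<delta>/2 .. b + \<delta>/2}"
  proof (rule emeasure_mono)
    show "digitalize R \<delta> -` ({a..b} - {R, - R}) \<subseteq> {a - \<delta> / 2..b + \<delta> / 2}"
    proof
      fix x assume "x \<in> digitalize R \<delta> -` ({a..b} - {R, - R})"
      then have "digitalize R \<delta> x \<in> {a..b}" "digitalize R \<delta> x \<notin> {R, - R}" by auto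
      with dig_close[OF R d this(2)] show "x \<in> {a - \<delta> / 2..b + \<delta> / 2}"
        unfolding atLeastAtMost_iff abs_le_iff by linarith
    qed
  qed simp
  also have "\<dots> \<le> ennreal (b - a + \<delta>)" using G_Icc[of "a - \<delta>/2" "b + \<delta>/2"] ab d by (simp add: algebra_simps)
  finally show ?thesis .
qed

lemma G_tail:
  assumes t: "t > 0"
  shows "emeasure gaussM {x. t \<le> \<bar>x\<bar>} \<le> ennreal (fact (2 * k) / (2^k * fact k) / t ^ (2 * k))"
proof -
  have hb: "has_bochner_integral lborel (\<lambda>x. std_normal_density x * x ^ (2 * k)) (fact (2 * k) / (2^k * fact k))"
    by (rule std_normal_moment_even)
  have "emeasure gaussM {x. t \<le> \<bar>x\<bar>} = (\<integral>\<^sup>+ x. ennreal (std_normal_density x) * indicator {x. t \<le> \<bar>x\<bar>} x \<partial>lborel)"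
    by (subst emeasure_density) auto
  also have "\<dots> \<le> (\<integral>\<^sup>+ x. ennreal (std_normal_density x * x ^ (2 * k) / t ^ (2 * k)) \<partial>lborel)"
  proof (intro nn_integral_mono)
    fix x
    show "ennreal (std_normal_density x) * indicator {x. t \<le> \<bar>x\<bar>} x \<le> ennreal (std_normal_density x * x ^ (2 * k) / t ^ (2 * k))"
    proof (cases "t \<le> \<bar>x\<bar>")
      case True
      have "t ^ (2 * k) \<le> \<bar>x\<bar> ^ (2 * k)" using True t by (intro power_mono) auto
      also have "\<bar>x\<bar> ^ (2 * k) = x ^ (2 * k)" by (simp add: power_mult power2_abs)
      finally have "1 \<le> x ^ (2 * k) / t ^ (2 * k)" using t by simp
      then have "std_normal_density x \<le> std_normal_density x * x ^ (2 * k) / t ^ (2 * k)"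
        using mult_left_mono[of 1 "x ^ (2 * k) / t ^ (2 * k)" "std_normal_density x"] by simp
      then show ?thesis using True by (simp add: indicator_def)
    next
      case False
      then show ?thesis by (simp add: indicator_def)
    qed
  qed
  also have "\<dots> = ennreal (integral\<^sup>L lborel (\<lambda>x. std_normal_density x * x ^ (2 * k) / t ^ (2 * k)))"
    by (rule nn_integral_eq_integral) (use hb in \<open>auto simp: has_bochner_integral_iff power_mult\<close>)
  also have "\<dots> = ennreal (fact (2 * k) / (2^k * fact k) / t ^ (2 * k))"
    using hb by (simp add: has_bochner_integral_iff)
  finally show ?thesis .
qed

lemma dig_edge_prob:
  assumes R: "R > 0" and d: "\<delta> > 0" and t: "R - \<delta> / 2 > 0"
  shows "emeasure (dig_gauss R \<delta>) {R, -R} \<le> ennreal (fact (2 * k) / (2^k * fact k) / (R - \<delta> / 2) ^ (2 * k))"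
proof -
  have "emeasure (dig_gauss R \<delta>) {R, -R} = emeasure gaussM (digitalize R \<delta> -` {R, -R})"
    unfolding dig_gauss_def by (subst emeasure_distr) auto
  also have "\<dots> \<le> emeasure gaussM {x. R - \<delta> / 2 \<le> \<bar>x\<bar>}"
    by (rule emeasure_mono) (use dig_edge[OF R d] in auto)
  also have "\<dots> \<le> ennreal (fact (2 * k) / (2^k * fact k) / (R - \<delta> / 2) ^ (2 * k))" by (rule G_tail[OF t])
  finally show ?thesis .
qed



lemma main_prob:
  fixes E :: "complex set" and M :: nat and R \<delta> \<epsilon> g :: real and k :: nat
  defines "P \<equiv> PiM {..<M} (\<lambda>_. dig_gauss R \<delta>)"
  defines "\<tau> \<equiv> fact (2 * k) / (2^k * fact k) / (R - \<delta> / 2) ^ (2 * k)"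
  assumes finE: "finite E" and g: "g > 0"
    and sep: "\<And>a b. a \<in> E \<Longrightarrow> b \<in> E \<Longrightarrow> a \<noteq> b \<Longrightarrow> g \<le> \<bar>Re (a - b)\<bar> \<or> g \<le> \<bar>Im (a - b)\<bar>"
    and R: "R > 0" and d: "\<delta> > 0" and Rd: "R - \<delta> / 2 > 0" and eps: "\<epsilon> \<ge> 0"
    and X: "X \<subseteq> {J \<in> space P. \<exists>a\<in>Pi\<^sub>E {..<M} (\<lambda>_. E). \<exists>b\<in>Pi\<^sub>E {..<M} (\<lambda>_. E). a \<noteq> b \<and>
            cmod (\<Sum>i<M. complex_of_real (J i) * (a i - b i)) \<le> \<epsilon>}"
  shows "measure P X
         \<le> real M * \<tau> + real (card E) ^ (2 * M) * (2 * \<epsilon> / g + \<delta>)"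
proof -
  let ?\<mu> = "dig_gauss R \<delta>"
  interpret mu: prob_space ?\<mu> by (rule dig_prob)
  interpret PP: product_prob_space "\<lambda>_. ?\<mu>" "{..<M}" by unfold_locales
  interpret P: prob_space P unfolding P_def by (intro prob_space_PiM dig_prob)
  have [measurable_cong]: "sets ?\<mu> = sets borel" by (rule dig_sets)
  define Bd where "Bd = {R, -R}"
  have Bd_sets[measurable]: "Bd \<in> sets borel" unfolding Bd_def by simp
  define C where "C = (\<lambda>i. {J \<in> space P. J i \<in> Bd})"
  define Ev where "Ev = (\<lambda>(a, b). {J \<in> space P. (\<forall>i<M. J i \<notin> Bd) \<and>
       cmod (\<Sum>i<M. complex_of_real (J i) * (a i - b i)) \<le> \<epsilon>})"
  define PE where "PE = Pi\<^sub>E {..<M} (\<lambda>_. E)"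
  define Pairs where "Pairs = {(a, b). a \<in> PE \<and> b \<in> PE \<and> a \<noteq> b}"
  have finPE: "finite PE" unfolding PE_def using finE by (simp add: finite_PiE)
  have finPairs: "finite Pairs"
    by (rule finite_subset[of _ "PE \<times> PE"]) (auto simp: Pairs_def finPE)
  have cardPairs: "card Pairs \<le> card E ^ (2 * M)"
  proof -
    have "card Pairs \<le> card (PE \<times> PE)"
      by (rule card_mono) (auto simp: Pairs_def finPE)
    also have "\<dots> = card E ^ (2 * M)"
      unfolding card_cartesian_product PE_def by (simp add: card_PiE power_mult power2_eq_square power_mult_distrib)
    finally show ?thesis .
  qed
  have C_sets: "C i \<in> sets P" if "i < M" for i
  proof -
    have "(\<lambda>J. J i) -` Bd \<inter> space P \<in> sets P" unfolding P_def
      by (rule measurable_sets[OF measurable_component_singleton]) (use that in \<open>auto simp: dig_sets\<close>)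
    moreover have "(\<lambda>J. J i) -` Bd \<inter> space P = C i" unfolding C_def by auto
    ultimately show ?thesis by simp
  qed
  have Ev_sets: "Ev p \<in> sets P" for p
    unfolding Ev_def P_def by (cases p) (simp, measurable)
  define Bad where "Bad = {J \<in> space P. \<exists>a\<in>Pi\<^sub>E {..<M} (\<lambda>_. E). \<exists>b\<in>Pi\<^sub>E {..<M} (\<lambda>_. E). a \<noteq> b \<and>
            cmod (\<Sum>i<M. complex_of_real (J i) * (a i - b i)) \<le> \<epsilon>}"
  have sub: "Bad \<subseteq> (\<Union>i\<in>{..<M}. C i) \<union> (\<Union>p\<in>Pairs. Ev p)"
  proof
    fix J assume J: "J \<in> Bad"
    show "J \<in> (\<Union>i\<in>{..<M}. C i) \<union> (\<Union>p\<in>Pairs. Ev p)"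
    proof (cases "\<exists>i<M. J i \<in> Bd")
      case True
      then show ?thesis using J unfolding Bad_def C_def by auto
    next
      case False
      from J obtain a b where "a \<in> PE" "b \<in> PE" "a \<noteq> b"
        "cmod (\<Sum>i<M. complex_of_real (J i) * (a i - b i)) \<le> \<epsilon>"
        unfolding Bad_def PE_def by blast
      then have "J \<in> Ev (a, b)" "(a, b) \<in> Pairs" using J False unfolding Ev_def Pairs_def Bad_def by auto
      then show ?thesis by blast
    qed
  qed
  have C_bound: "measure P (C i) \<le> \<tau>" if "i < M" for i
  proof -
    have "emeasure P (C i) = emeasure ?\<mu> Bd"
      unfolding P_def C_def using that by (intro PP.emeasure_PiM_Collect_single) (auto simp: dig_sets)
    also have "\<dots> \<le> ennreal \<tau>" unfolding Bd_def \<tau>_def by (rule dig_edge_prob[OF R d Rd])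
    finally show ?thesis
      by (simp add: P.emeasure_eq_measure \<tau>_def ennreal_le_iff)
  qed
  have Ev_bound: "measure P (Ev p) \<le> 2 * \<epsilon> / g + \<delta>" if p: "p \<in> Pairs" for p
  proof -
    obtain a b where ab: "p = (a, b)" "a \<in> PE" "b \<in> PE" "a \<noteq> b" using p unfolding Pairs_def by auto
    obtain i0 where i0: "a i0 \<noteq> b i0" using ab by (meson ext)
    have i0M: "i0 < M"
    proof (rule ccontr)
      assume "\<not> i0 < M"
      then have "a i0 = undefined" "b i0 = undefined" using ab unfolding PE_def PiE_def extensional_def by auto
      then show False using i0 by simp
    qed
    have aE: "a i0 \<in> E" "b i0 \<in> E" using ab i0M unfolding PE_def by auto
    have key: "emeasure P {J \<in> space P. J i0 \<notin> Bd \<and> \<bar>\<Sum>i<M. J i * x i\<bar> \<le> \<epsilon>} \<le> ennreal (2 * \<epsilon> / g + \<delta>)"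
      if x0: "g \<le> \<bar>x i0\<bar>" for x :: "nat \<Rightarrow> real"
      unfolding P_def
    proof (rule pair_bound[OF dig_prob dig_sets i0M Bd_sets])
      show "x i0 \<noteq> 0" using x0 g by auto
      fix lo
      have "2 * \<epsilon> / \<bar>x i0\<bar> \<le> 2 * \<epsilon> / g"
        using x0 g eps by (intro divide_left_mono) auto
      moreover have "emeasure ?\<mu> ({lo..lo + 2 * \<epsilon> / \<bar>x i0\<bar>} - {R, -R}) \<le> ennreal (2 * \<epsilon> / \<bar>x i0\<bar> + \<delta>)"
        using dig_interval[OF R d, of lo "lo + 2 * \<epsilon> / \<bar>x i0\<bar>"] eps by simp
      ultimately show "emeasure ?\<mu> ({lo..lo + 2 * \<epsilon> / \<bar>x i0\<bar>} - Bd) \<le> ennreal (2 * \<epsilon> / g + \<delta>)"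
        unfolding Bd_def by (meson add_right_mono ennreal_leI order_trans)
    qed
    have "emeasure P (Ev p) \<le> ennreal (2 * \<epsilon> / g + \<delta>)"
    proof (cases "g \<le> \<bar>Re (a i0 - b i0)\<bar>")
      case True
      have "Ev p \<subseteq> {J \<in> space P. J i0 \<notin> Bd \<and> \<bar>\<Sum>i<M. J i * Re (a i - b i)\<bar> \<le> \<epsilon>}"
      proof
        fix J assume "J \<in> Ev p"
        then have J: "J \<in> space P" "\<forall>i<M. J i \<notin> Bd" "cmod (\<Sum>i<M. complex_of_real (J i) * (a i - b i)) \<le> \<epsilon>"
          unfolding Ev_def ab by auto
        have "Re (\<Sum>i<M. complex_of_real (J i) * (a i - b i)) = (\<Sum>i<M. J i * Re (a i - b i))"
          by (simp add: Re_sum)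
        then have "\<bar>\<Sum>i<M. J i * Re (a i - b i)\<bar> \<le> \<epsilon>" using J(3) abs_Re_le_cmod order_trans by metis
        then show "J \<in> {J \<in> space P. J i0 \<notin> Bd \<and> \<bar>\<Sum>i<M. J i * Re (a i - b i)\<bar> \<le> \<epsilon>}"
          using J i0M by auto
      qed
      then show ?thesis using key[of "\<lambda>i. Re (a i - b i)"] True
          pair_meas[OF dig_sets i0M Bd_sets, where x="\<lambda>i. Re (a i - b i)" and \<epsilon>=\<epsilon>]
        unfolding P_def by (meson emeasure_mono order_trans)
    next
      case False
      then have gi: "g \<le> \<bar>Im (a i0 - b i0)\<bar>" using sep[OF aE i0] by simp
      have "Ev p \<subseteq> {J \<in> space P. J i0 \<notin> Bd \<and> \<bar>\<Sum>i<M. J i * Im (a i - b i)\<bar> \<le> \<epsilon>}"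
      proof
        fix J assume "J \<in> Ev p"
        then have J: "J \<in> space P" "\<forall>i<M. J i \<notin> Bd" "cmod (\<Sum>i<M. complex_of_real (J i) * (a i - b i)) \<le> \<epsilon>"
          unfolding Ev_def ab by auto
        have "Im (\<Sum>i<M. complex_of_real (J i) * (a i - b i)) = (\<Sum>i<M. J i * Im (a i - b i))"
          by (simp add: Im_sum)
        then have "\<bar>\<Sum>i<M. J i * Im (a i - b i)\<bar> \<le> \<epsilon>" using J(3) abs_Im_le_cmod order_trans by metis
        then show "J \<in> {J \<in> space P. J i0 \<notin> Bd \<and> \<bar>\<Sum>i<M. J i * Im (a i - b i)\<bar> \<le> \<epsilon>}"
          using J i0M by auto
      qed
      then show ?thesis using key[of "\<lambda>i. Im (a i - b i)"] gi
          pair_meas[OF dig_sets i0M Bd_sets, where x="\<lambda>i. Im (a i - b i)" and \<epsilon>=\<epsilon>]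
        unfolding P_def by (meson emeasure_mono order_trans)
    qed
    moreover have "0 \<le> 2 * \<epsilon> / g + \<delta>" using eps g d by simp
    ultimately show ?thesis by (simp add: P.emeasure_eq_measure ennreal_le_iff)
  qed
  have "measure P X \<le> measure P ((\<Union>i\<in>{..<M}. C i) \<union> (\<Union>p\<in>Pairs. Ev p))"
    by (rule P.finite_measure_mono[OF subset_trans[OF X[folded Bad_def] sub]]) (intro sets.Un sets.finite_UN; use C_sets Ev_sets finPairs in auto)
  also have "\<dots> \<le> measure P (\<Union>i\<in>{..<M}. C i) + measure P (\<Union>p\<in>Pairs. Ev p)"
    by (rule measure_Un_le) (intro sets.Un sets.finite_UN; use C_sets Ev_sets finPairs in auto)+
  also have "\<dots> \<le> (\<Sum>i\<in>{..<M}. measure P (C i)) + (\<Sum>p\<in>Pairs. measure P (Ev p))"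
    by (intro add_mono P.finite_measure_subadditive_finite) (use C_sets Ev_sets finPairs in auto)
  also have "\<dots> \<le> (\<Sum>i\<in>{..<M}. \<tau>) + (\<Sum>p\<in>Pairs. 2 * \<epsilon> / g + \<delta>)"
    by (intro add_mono sum_mono C_bound Ev_bound) auto
  also have "\<dots> = real M * \<tau> + real (card Pairs) * (2 * \<epsilon> / g + \<delta>)" by simp
  also have "\<dots> \<le> real M * \<tau> + real (card E) ^ (2 * M) * (2 * \<epsilon> / g + \<delta>)"
  proof -
    have "real (card Pairs) \<le> real (card E) ^ (2 * M)" using cardPairs
      by (metis of_nat_le_iff of_nat_power)
    then show ?thesis using eps g d by (intro add_left_mono mult_right_mono) auto
  qed
  finally show ?thesis .
qed



lemma ham_eig:
  assumes ev: "\<And>i. i < M \<Longrightarrow> eigvec N (h i) (a i) v"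
    and evH: "eigvec N (hamiltonian M h J) \<mu> v"
  shows "\<mu> = (\<Sum>i<M. complex_of_real (J i) * a i)"
proof -
  obtain k where k: "k < N" "v k \<noteq> 0" using evH unfolding eigvec_def by blast
  have "\<mu> * v k = mvec N (hamiltonian M h J) v k" using evH k unfolding eigvec_def by simp
  also have "\<dots> = (\<Sum>j<N. \<Sum>i<M. complex_of_real (J i) * h i k j * v j)"
    unfolding mvec_def hamiltonian_def by (simp add: sum_distrib_right)
  also have "\<dots> = (\<Sum>i<M. complex_of_real (J i) * mvec N (h i) v k)"
    unfolding mvec_def by (subst sum.swap) (simp add: sum_distrib_left mult.assoc)
  also have "\<dots> = (\<Sum>i<M. complex_of_real (J i) * (a i * v k))"
    using ev k unfolding eigvec_def by (intro sum.cong) auto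
  also have "\<dots> = (\<Sum>i<M. complex_of_real (J i) * a i) * v k"
    by (simp add: sum_distrib_right mult.assoc)
  finally show ?thesis using k by simp
qed

lemma gap_reduce:
  assumes csco: "CSCO N M h"
    and Eh: "\<And>i a v. i < M \<Longrightarrow> eigvec N (h i) a v \<Longrightarrow> a \<in> E"
    and sg: "small_gap N M h \<epsilon> J"
  shows "\<exists>a\<in>Pi\<^sub>E {..<M} (\<lambda>_. E). \<exists>b\<in>Pi\<^sub>E {..<M} (\<lambda>_. E). a \<noteq> b \<and>
            cmod (\<Sum>i<M. complex_of_real (J i) * (a i - b i)) \<le> \<epsilon>"
proof -
  obtain v w \<mu> \<nu> where vw: "common_eigvec N M h v" "common_eigvec N M h w" "\<not> parallel N v w"
      "eigvec N (hamiltonian M h J) \<mu> v" "eigvec N (hamiltonian M h J) \<nu> w" "cmod (\<mu> - \<nu>) \<le> \<epsilon>"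
    using sg unfolding small_gap_def by blast
  obtain a' where a': "\<And>i. i < M \<Longrightarrow> eigvec N (h i) (a' i) v" using vw(1) unfolding common_eigvec_def by blast
  obtain b' where b': "\<And>i. i < M \<Longrightarrow> eigvec N (h i) (b' i) w" using vw(2) unfolding common_eigvec_def by blast
  define a where "a = restrict a' {..<M}"
  define b where "b = restrict b' {..<M}"
  have aE: "a \<in> Pi\<^sub>E {..<M} (\<lambda>_. E)" unfolding a_def using Eh a' by auto
  have bE: "b \<in> Pi\<^sub>E {..<M} (\<lambda>_. E)" unfolding b_def using Eh b' by auto
  have ne: "a \<noteq> b"
  proof
    assume "a = b"
    then have eq: "a' i = b' i" if "i < M" for i
      using that unfolding a_def b_def by (metis lessThan_iff restrict_apply')
    have "\<forall>i<M. eigvec N (h i) (a' i) w" using b' eq by auto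
    then have "parallel N v w" using csco a' unfolding CSCO_def by blast
    then show False using vw(3) by simp
  qed
  have "\<mu> - \<nu> = (\<Sum>i<M. complex_of_real (J i) * a' i) - (\<Sum>i<M. complex_of_real (J i) * b' i)"
    using ham_eig[OF a' vw(4)] ham_eig[OF b' vw(5)] by simp
  also have "\<dots> = (\<Sum>i<M. complex_of_real (J i) * (a i - b i))"
    unfolding a_def b_def by (simp add: sum_subtractf right_diff_distrib)
  finally show ?thesis using aE bE ne vw(6) by auto
qed



lemma negl_bound_n:
  fixes n q k Mn :: nat and c C1 C2 g K \<beta> Rn \<delta>n fn :: real and cardE :: nat
  assumes n: "n \<ge> 1" and Mn: "real Mn \<le> C1 * real n"
    and R: "real n powr c \<le> Rn" and d1: "\<delta>n \<le> C2 * exp (- (\<beta> * real n))" and d2: "\<delta>n \<le> 1"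
    and dpos: "\<delta>n > 0" and c: "c > 0" and kc: "real q + 2 \<le> 2 * real k * c"
    and C1: "C1 > 0" and C2: "C2 > 0" and g: "g > 0" and K: "real cardE + 1 \<le> K"
    and \<beta>K: "2 * C1 * ln K + 1 \<le> \<beta> * ln 2" and \<beta>: "\<beta> > 0"
    and f: "fn \<le> real Mn * (fact (2 * k) / (2^k * fact k) / (Rn - \<delta>n / 2) ^ (2 * k))
              + real cardE ^ (2 * Mn) * (2 * (2 powr (- \<beta> * real n)) / g + \<delta>n)"
    and f0: "fn \<ge> 0"
  shows "real n ^ q * \<bar>fn\<bar> \<le> C1 * (fact (2 * k) / (2^k * fact k)) * 4 ^ k / real n
            + (2 / g + C2) * real n ^ q * exp (- real n)"
proof -
  define mk :: real where "mk = fact (2 * k) / (2^k * fact k)"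
  have mk0: "mk \<ge> 0" unfolding mk_def by simp
  have n0: "real n > 0" using n by simp
  have npc: "real n powr c \<ge> 1" using n c by (simp add: ge_one_powr_ge_zero)
  have Rd: "Rn - \<delta>n / 2 \<ge> real n powr c / 2" using R npc d2 by linarith
  have four: "(2::real) ^ (2 * k) = 4 ^ k" by (simp add: power_mult)
  have eq: "(real n powr c / 2) ^ (2 * k) = real n powr (2 * real k * c) / 4 ^ k"
    using n0 four by (simp add: power_divide powr_power power_mult mult.commute mult.left_commute)
  have ge0: "real n powr (2 * real k * c) \<ge> real n powr (real q + 2)"
    using kc n by (intro powr_mono) auto
  have "real n powr (real q + 2) = real n ^ (q + 2)"
    using n0 powr_realpow[of "real n" "q + 2"] by (simp add: add.commute)
  with ge0 have ge: "real n powr (2 * real k * c) \<ge> real n ^ (q + 2)" by simp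
  have pow: "(Rn - \<delta>n / 2) ^ (2 * k) \<ge> real n ^ (q + 2) / 4 ^ k"
  proof -
    have "(Rn - \<delta>n / 2) ^ (2 * k) \<ge> (real n powr c / 2) ^ (2 * k)"
      using Rd npc by (intro power_mono) auto
    moreover have "real n powr (2 * real k * c) / 4 ^ k \<ge> real n ^ (q + 2) / 4 ^ k"
      using ge by (intro divide_right_mono) auto
    ultimately show ?thesis using eq by linarith
  qed
  have pos1: "real n ^ (q + 2) / 4 ^ k > 0" using n0 by simp
  have tau: "mk / (Rn - \<delta>n / 2) ^ (2 * k) \<le> mk * 4 ^ k / real n ^ (q + 2)"
  proof -
    have "mk / (Rn - \<delta>n / 2) ^ (2 * k) \<le> mk / (real n ^ (q + 2) / 4 ^ k)"
    proof (rule divide_left_mono[OF pow mk0])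
      have "0 < (Rn - \<delta>n / 2) ^ (2 * k)" using pow pos1 by linarith
      then show "0 < (Rn - \<delta>n / 2) ^ (2 * k) * (real n ^ (q + 2) / 4 ^ k)"
        using pos1 by (rule mult_pos_pos)
    qed
    then show ?thesis by simp
  qed
  have term1: "real Mn * (mk / (Rn - \<delta>n / 2) ^ (2 * k)) \<le> C1 * mk * 4 ^ k / real n ^ (q + 1)"
  proof -
    have "real Mn * (mk / (Rn - \<delta>n / 2) ^ (2 * k)) \<le> (C1 * real n) * (mk * 4 ^ k / real n ^ (q + 2))"
      using Mn tau mk0 pow pos1 by (intro mult_mono) auto
    also have "\<dots> = C1 * mk * 4 ^ k / real n ^ (q + 1)" using n0 by (simp add: field_simps)
    finally show ?thesis .
  qed
  have K1: "K \<ge> 1" using K by simp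
  have cardK: "real cardE ^ (2 * Mn) \<le> exp (2 * C1 * real n * ln K)"
  proof -
    have "real cardE ^ (2 * Mn) \<le> K ^ (2 * Mn)" using K by (intro power_mono) auto
    also have "\<dots> = K powr (real (2 * Mn))" using K1 powr_realpow[of K "2 * Mn"] by simp
    also have "\<dots> \<le> K powr (2 * C1 * real n)" using Mn K1 by (intro powr_mono) auto
    also have "\<dots> = exp (2 * C1 * real n * ln K)" using K1 by (simp add: powr_def mult_ac)
    finally show ?thesis .
  qed
  have eps: "2 powr (- \<beta> * real n) = exp (- (\<beta> * real n * ln 2))" by (simp add: powr_def)
  have ex: "exp (- (\<beta> * real n)) \<le> exp (- (\<beta> * real n * ln 2))"
  proof -
    have "\<beta> * real n * ln 2 \<le> \<beta> * real n * 1" using \<beta> n0 ln_2_less_1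
      by (intro mult_left_mono) auto
    then show ?thesis by simp
  qed
  have term2b: "2 * (2 powr (- \<beta> * real n)) / g + \<delta>n \<le> (2 / g + C2) * exp (- (\<beta> * real n * ln 2))"
  proof -
    have "\<delta>n \<le> C2 * exp (- (\<beta> * real n * ln 2))"
      using d1 ex C2 by (meson mult_left_mono less_imp_le order_trans)
    then show ?thesis unfolding eps by (simp add: algebra_simps)
  qed
  have term2: "real cardE ^ (2 * Mn) * (2 * (2 powr (- \<beta> * real n)) / g + \<delta>n) \<le> (2 / g + C2) * exp (- real n)"
  proof -
    have "real cardE ^ (2 * Mn) * (2 * (2 powr (- \<beta> * real n)) / g + \<delta>n)
        \<le> exp (2 * C1 * real n * ln K) * ((2 / g + C2) * exp (- (\<beta> * real n * ln 2)))"
      using cardK term2b dpos g by (intro mult_mono) auto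
    also have "\<dots> = (2 / g + C2) * exp (real n * (2 * C1 * ln K - \<beta> * ln 2))"
      by (simp add: exp_add[symmetric] algebra_simps)
    also have "\<dots> \<le> (2 / g + C2) * exp (- real n)"
    proof -
      have "real n * (2 * C1 * ln K - \<beta> * ln 2) \<le> real n * (-1)"
        using \<beta>K n0 by (intro mult_left_mono) auto
      then show ?thesis using g C2 by (intro mult_left_mono) auto
    qed
    finally show ?thesis .
  qed
  have "fn \<le> C1 * mk * 4 ^ k / real n ^ (q + 1) + (2 / g + C2) * exp (- real n)"
    using f term1 term2 unfolding mk_def by linarith
  then have "real n ^ q * \<bar>fn\<bar> \<le> real n ^ q * (C1 * mk * 4 ^ k / real n ^ (q + 1) + (2 / g + C2) * exp (- real n))"
    using f0 by (intro mult_left_mono) auto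
  also have "\<dots> = C1 * mk * 4 ^ k / real n + (2 / g + C2) * real n ^ q * exp (- real n)"
    using n0 by (simp add: field_simps)
  finally show ?thesis unfolding mk_def .
qed



lemma digit_bound_n:
  fixes n Mn :: nat and C1 C c2 \<beta> Rn \<delta>n :: real
  assumes n: "n \<ge> 1" and Mn: "real Mn \<le> C1 * real n" and Mn1: "Mn \<ge> 1"
    and R: "Rn \<le> real n powr C" and Rpos: "Rn > 0"
    and d: "\<delta>n \<ge> c2 / (exp (\<beta> * real n) * real Mn)" and dpos: "\<delta>n > 0"
    and c2: "c2 > 0" and C1: "C1 > 0" and \<beta>: "\<beta> > 0"
    and ex: "real n powr C * real n \<le> exp (real n)"
  shows "\<bar>digit_bits Mn Rn \<delta>n\<bar> \<le> C1 * ((\<bar>ln (2 * C1 / c2 + 1)\<bar> + \<beta> + 1) / ln 2 + 1) * real n ^ 2"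
proof -
  define B where "B = 2 * C1 / c2 + 1"
  have B1: "B \<ge> 1" unfolding B_def using C1 c2 by simp
  define x where "x = 2 * Rn / \<delta>n + 1"
  have x1: "x > 1" unfolding x_def using Rpos dpos by simp
  have n0: "real n > 0" using n by simp
  have M0: "real Mn > 0" using Mn1 by simp
  have inv: "1 / \<delta>n \<le> exp (\<beta> * real n) * real Mn / c2"
  proof -
    have pos: "0 < c2 / (exp (\<beta> * real n) * real Mn)" using c2 M0 by simp
    have "1 / \<delta>n \<le> 1 / (c2 / (exp (\<beta> * real n) * real Mn))"
      using d pos dpos by (intro divide_left_mono mult_pos_pos) auto
    then show ?thesis by simp
  qed
  have "2 * Rn / \<delta>n = 2 * Rn * (1 / \<delta>n)" by simp
  also have "\<dots> \<le> 2 * (real n powr C) * (exp (\<beta> * real n) * (C1 * real n) / c2)"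
  proof -
    have "exp (\<beta> * real n) * real Mn / c2 \<le> exp (\<beta> * real n) * (C1 * real n) / c2"
      using Mn c2 by (intro divide_right_mono mult_left_mono) auto
    then have b: "1 / \<delta>n \<le> exp (\<beta> * real n) * (C1 * real n) / c2" using inv by linarith
    have a: "2 * Rn \<le> 2 * (real n powr C)" using R by simp
    show ?thesis by (rule mult_mono[OF a b]) (use Rpos dpos in auto)
  qed
  also have "\<dots> = (2 * C1 / c2) * exp (\<beta> * real n) * (real n powr C * real n)"
    by (simp add: mult_ac)
  also have "\<dots> \<le> (2 * C1 / c2) * exp (\<beta> * real n) * exp (real n)"
    using ex C1 c2 by (intro mult_left_mono) auto
  also have "\<dots> = (2 * C1 / c2) * exp ((\<beta> + 1) * real n)"
  proof -
    have "exp ((\<beta> + 1) * real n) = exp (\<beta> * real n) * exp (real n)"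
      by (simp add: distrib_right exp_add)
    then show ?thesis by simp
  qed
  finally have "x \<le> (2 * C1 / c2) * exp ((\<beta> + 1) * real n) + 1" unfolding x_def by simp
  also have "\<dots> \<le> B * exp ((\<beta> + 1) * real n)"
  proof -
    have "1 \<le> exp ((\<beta> + 1) * real n)" using \<beta> n0 by simp
    then show ?thesis unfolding B_def by (simp add: distrib_right)
  qed
  finally have xB: "x \<le> B * exp ((\<beta> + 1) * real n)" .
  have "ln x \<le> ln (B * exp ((\<beta> + 1) * real n))" using xB x1 by simp
  also have "\<dots> = ln B + (\<beta> + 1) * real n" using B1 by (simp add: ln_mult)
  finally have lnx: "ln x \<le> ln B + (\<beta> + 1) * real n" .
  have lx0: "log 2 x > 0" using x1 by simp
  have lxle: "log 2 x \<le> (\<bar>ln B\<bar> + \<beta> + 1) / ln 2 * real n"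
  proof -
    have "log 2 x = ln x / ln 2" by (simp add: log_def)
    also have "\<dots> \<le> (ln B + (\<beta> + 1) * real n) / ln 2" using lnx by (intro divide_right_mono) auto
    also have "\<dots> \<le> (\<bar>ln B\<bar> * real n + (\<beta> + 1) * real n) / ln 2"
    proof -
      have "\<bar>ln B\<bar> * 1 \<le> \<bar>ln B\<bar> * real n" by (intro mult_left_mono) (use n in auto)
      then have "ln B \<le> \<bar>ln B\<bar> * real n" by linarith
      then show ?thesis by (intro divide_right_mono) auto
    qed
    also have "\<dots> = (\<bar>ln B\<bar> + \<beta> + 1) / ln 2 * real n" by (simp add: field_simps)
    finally show ?thesis .
  qed
  have ceil0: "(0::real) \<le> of_int \<lceil>log 2 x\<rceil>" using lx0 le_of_int_ceiling[of "log 2 x"] by linarith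
  have ceil1: "(of_int \<lceil>log 2 x\<rceil> :: real) \<le> (\<bar>ln B\<bar> + \<beta> + 1) / ln 2 * real n + real n"
    using lxle n by linarith
  have db: "digit_bits Mn Rn \<delta>n = real Mn * of_int \<lceil>log 2 x\<rceil>" unfolding digit_bits_def x_def by simp
  have "\<bar>digit_bits Mn Rn \<delta>n\<bar> = real Mn * of_int \<lceil>log 2 x\<rceil>" using db ceil0 by simp
  also have "\<dots> \<le> (C1 * real n) * ((\<bar>ln B\<bar> + \<beta> + 1) / ln 2 * real n + real n)"
    using Mn ceil0 ceil1 by (intro mult_mono) auto
  also have "\<dots> = C1 * ((\<bar>ln B\<bar> + \<beta> + 1) / ln 2 + 1) * real n ^ 2"
    by (simp add: algebra_simps power2_eq_square)
  finally show ?thesis unfolding B_def .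
qed



theorem lemma3:
  fixes d :: nat
    and T :: "(nat \<times> cmat) set"
    and M :: "nat \<Rightarrow> nat"
    and \<alpha> :: "nat \<Rightarrow> nat \<Rightarrow> nat \<times> cmat"
    and S :: "nat \<Rightarrow> nat \<Rightarrow> nat list"
  defines "h \<equiv> (\<lambda>n i. embed n (S n i) (snd (\<alpha> n i)))"
  assumes d_pos: "d \<ge> 1"
    and T_fin: "finite T"
    and T_props: "\<And>m A. (m, A) \<in> T \<Longrightarrow>
                    m \<le> d \<and> hermitian_op (2 ^ m) A \<and> nondegenerate (2 ^ m) A"
    and M_lin: "(\<lambda>n. real (M n)) \<in> \<Theta>(\<lambda>n. real n)"
    and templ: "\<And>n i. n \<ge> 1 \<Longrightarrow> i < M n \<Longrightarrow> \<alpha> n i \<in> T"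
    and supp: "\<And>n i. n \<ge> 1 \<Longrightarrow> i < M n \<Longrightarrow>
                 distinct (S n i) \<and> set (S n i) \<subseteq> {..<n} \<and> length (S n i) = fst (\<alpha> n i)"
    and csco: "\<And>n. n \<ge> 1 \<Longrightarrow> CSCO (2 ^ n) (M n) (h n)"
  shows "\<exists>\<beta>0>0. \<forall>\<beta>\<ge>\<beta>0. \<forall>R \<delta> :: nat \<Rightarrow> real.
           (\<forall>n. R n > 0 \<and> \<delta> n > 0 \<and> (\<exists>k::nat. odd k \<and> R n / \<delta> n = real k)) \<and>
           is_poly_growth R \<and>
           \<delta> \<in> \<Theta>(\<lambda>n. 1 / (exp (\<beta> * real n) * real (M n)))
           \<longrightarrow>
           negl (\<lambda>n. measure (PiM {..<M n} (\<lambda>_. dig_gauss (R n) (\<delta> n)))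
                        {J \<in> space (PiM {..<M n} (\<lambda>_. dig_gauss (R n) (\<delta> n))).
                           small_gap (2 ^ n) (M n) (h n) (2 powr (- \<beta> * real n)) J}) \<and>
           poly_bounded (\<lambda>n. digit_bits (M n) (R n) (\<delta> n))"
proof -
  define E where "E = (\<Union>p\<in>T. {a. \<exists>u. eigvec (2 ^ fst p) (snd p) a u})"
  have finE: "finite E" unfolding E_def using T_fin eigvec_finite by auto
  have Eh: "a \<in> E" if n: "n \<ge> 1" and i: "i < M n" and ev: "eigvec (2 ^ n) (h n i) a v" for n i a v
  proof -
    have s: "distinct (S n i)" "set (S n i) \<subseteq> {..<n}" "length (S n i) = fst (\<alpha> n i)"
      using supp[OF n i] by auto
    obtain u where "eigvec (2 ^ length (S n i)) (snd (\<alpha> n i)) a u"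
      using embed_eig[OF s(1) s(2)] ev unfolding h_def by blast
    then show ?thesis using templ[OF n i] s(3) unfolding E_def by auto
  qed
  define D where "D = {(a, b). a \<in> E \<and> b \<in> E \<and> a \<noteq> b}"
  define gf where "gf = (\<lambda>(a, b). max \<bar>Re (a - b)\<bar> \<bar>Im (a - b)\<bar>)"
  define g where "g = (if D = {} then 1 else Min (gf ` D))"
  have finD: "finite D" by (rule finite_subset[of _ "E \<times> E"]) (auto simp: D_def finE)
  have gfpos: "gf p > 0" if pD: "p \<in> D" for p
  proof -
    obtain a b where p: "p = (a, b)" "a \<noteq> b" using pD D_def by auto
    then have "Re (a - b) \<noteq> 0 \<or> Im (a - b) \<noteq> 0" by (auto simp: complex_eq_iff)
    then show ?thesis unfolding p gf_def by auto
  qed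
  have gpos: "g > 0"
  proof (cases "D = {}")
    case False
    then show ?thesis unfolding g_def using finD gfpos by (simp add: Min_gr_iff)
  qed (simp add: g_def)
  have sep: "g \<le> \<bar>Re (a - b)\<bar> \<or> g \<le> \<bar>Im (a - b)\<bar>" if "a \<in> E" "b \<in> E" "a \<noteq> b" for a b
  proof -
    have ab: "(a, b) \<in> D" using that D_def by auto
    then have "g \<le> gf (a, b)" unfolding g_def using finD by (auto intro!: Min_le)
    then show ?thesis unfolding gf_def by (auto simp: max_def split: if_splits)
  qed
  obtain C1 where C1: "C1 > 0" and ev1': "eventually (\<lambda>n. norm (real (M n)) \<le> C1 * norm (real n)) at_top"
    using bigthetaD1[OF M_lin] by (elim landau_o.bigE) blast
  have ev1: "eventually (\<lambda>n. real (M n) \<le> C1 * real n) at_top" using ev1' by simp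
  obtain c1 where c1: "c1 > 0" and ev2': "eventually (\<lambda>n. norm (real (M n)) \<ge> c1 * norm (real n)) at_top"
    using bigthetaD2[OF M_lin] by (elim landau_omega.bigE) blast
  have ev2: "eventually (\<lambda>n. real (M n) \<ge> c1 * real n) at_top" using ev2' by simp
  have evM1: "eventually (\<lambda>n. M n \<ge> 1) at_top"
    using ev2 eventually_ge_at_top[of 1]
  proof eventually_elim
    case (elim n)
    then have "c1 * real n > 0" using c1 by simp
    then have "real (M n) > 0" using elim by linarith
    then show ?case by simp
  qed
  define K where "K = real (card E) + 1"
  have K1: "K \<ge> 1" unfolding K_def by simp
  define \<beta>0 where "\<beta>0 = (2 * C1 * ln K + 1) / ln 2"
  have \<beta>0pos: "\<beta>0 > 0" unfolding \<beta>0_def using C1 K1 by (simp add: ln_ge_zero add_nonneg_pos)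
  show ?thesis
  proof (rule exI[of _ \<beta>0], intro conjI allI impI)
    show "\<beta>0 > 0" by (rule \<beta>0pos)
    fix \<beta> :: real and R \<delta> :: "nat \<Rightarrow> real"
    assume \<beta>: "\<beta> \<ge> \<beta>0"
    assume H: "(\<forall>n. R n > 0 \<and> \<delta> n > 0 \<and> (\<exists>k::nat. odd k \<and> R n / \<delta> n = real k)) \<and>
           is_poly_growth R \<and> \<delta> \<in> \<Theta>(\<lambda>n. 1 / (exp (\<beta> * real n) * real (M n)))"
    have Rpos: "R n > 0" and dpos: "\<delta> n > 0" for n using H by auto
    have \<beta>pos: "\<beta> > 0" using \<beta> \<beta>0pos by simp
    have \<beta>K: "2 * C1 * ln K + 1 \<le> \<beta> * ln 2"
      using \<beta> unfolding \<beta>0_def by (simp add: pos_divide_le_eq)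
    obtain c C where c: "c > 0" and evR: "eventually (\<lambda>n. real n powr c \<le> R n \<and> R n \<le> real n powr C) at_top"
      using H unfolding is_poly_growth_def by blast
    have dth: "\<delta> \<in> \<Theta>(\<lambda>n. 1 / (exp (\<beta> * real n) * real (M n)))" using H by blast
    obtain C2 where C2: "C2 > 0" and evd1: "eventually (\<lambda>n. norm (\<delta> n) \<le> C2 * norm (1 / (exp (\<beta> * real n) * real (M n)))) at_top"
      using bigthetaD1[OF dth] by (elim landau_o.bigE) blast
    obtain c2 where c2: "c2 > 0" and evd2: "eventually (\<lambda>n. norm (\<delta> n) \<ge> c2 * norm (1 / (exp (\<beta> * real n) * real (M n)))) at_top"
      using bigthetaD2[OF dth] by (elim landau_omega.bigE) blast
    have evd1': "eventually (\<lambda>n. \<delta> n \<le> C2 * exp (- (\<beta> * real n))) at_top"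
      using evd1 evM1
    proof eventually_elim
      case (elim n)
      have "1 / (exp (\<beta> * real n) * real (M n)) \<le> 1 / exp (\<beta> * real n)"
        using elim by (intro divide_left_mono) auto
      also have "\<dots> = exp (- (\<beta> * real n))" by (simp add: exp_minus field_simps)
      finally have "1 / (exp (\<beta> * real n) * real (M n)) \<le> exp (- (\<beta> * real n))" .
      moreover have "norm (\<delta> n) = \<delta> n" using dpos[of n] by simp
      moreover have "norm (1 / (exp (\<beta> * real n) * real (M n))) = 1 / (exp (\<beta> * real n) * real (M n))"
        by simp
      ultimately show ?case using elim C2 by (metis mult_left_mono less_imp_le order_trans)
    qed
    have evd2': "eventually (\<lambda>n. \<delta> n \<ge> c2 / (exp (\<beta> * real n) * real (M n))) at_top"
      using evd2
    proof eventually_elim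
      case (elim n)
      then show ?case using dpos[of n] by simp
    qed
    have lim0: "((\<lambda>n. C2 * exp (- (\<beta> * real n))) \<longlongrightarrow> 0) at_top" using \<beta>pos by real_asymp
    have evsmall: "eventually (\<lambda>n. C2 * exp (- (\<beta> * real n)) < 1) at_top"
      using order_tendstoD(2)[OF lim0, of 1] by simp
    have evd_le1: "eventually (\<lambda>n. \<delta> n \<le> 1) at_top"
      using evd1' evsmall by eventually_elim simp
    show "negl (\<lambda>n. measure (PiM {..<M n} (\<lambda>_. dig_gauss (R n) (\<delta> n)))
                        {J \<in> space (PiM {..<M n} (\<lambda>_. dig_gauss (R n) (\<delta> n))).
                           small_gap (2 ^ n) (M n) (h n) (2 powr (- \<beta> * real n)) J})"
      (is "negl ?f")
      unfolding negl_def
    proof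
      fix q :: nat
      define k where "k = nat \<lceil>(real q + 2) / (2 * c)\<rceil>"
      have kc: "real q + 2 \<le> 2 * real k * c"
      proof -
        have "(real q + 2) / (2 * c) \<le> real k" unfolding k_def by linarith
        then show ?thesis using c by (simp add: divide_le_eq mult_ac)
      qed
      define mk :: real where "mk = fact (2 * k) / (2^k * fact k)"
      define A where "A = 2 / g + C2"
      define B where "B = C1 * mk * 4 ^ k"
      have lim: "((\<lambda>n. B / real n + A * real n ^ q * exp (- real n)) \<longlongrightarrow> 0) at_top"
        by real_asymp
      have evlim: "eventually (\<lambda>n. B / real n + A * real n ^ q * exp (- real n) < 1) at_top"
        using order_tendstoD(2)[OF lim, of 1] by simp
      have evkey: "eventually (\<lambda>n. real n ^ q * \<bar>?f n\<bar> \<le> B / real n + A * real n ^ q * exp (- real n)) at_top"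
        using ev1 evM1 evR evd1' evd_le1 eventually_ge_at_top[of 1]
      proof eventually_elim
        case (elim n)
        have n1: "n \<ge> 1" using elim by simp
        let ?P = "PiM {..<M n} (\<lambda>_. dig_gauss (R n) (\<delta> n))"
        interpret P: prob_space ?P by (intro prob_space_PiM dig_prob)
        have npc: "real n powr c \<ge> 1" using n1 c by (simp add: ge_one_powr_ge_zero)
        have Rd: "R n - \<delta> n / 2 > 0" using elim npc by linarith
        have sub: "{J \<in> space ?P. small_gap (2 ^ n) (M n) (h n) (2 powr (- \<beta> * real n)) J}
          \<subseteq> {J \<in> space ?P. \<exists>a\<in>Pi\<^sub>E {..<M n} (\<lambda>_. E). \<exists>b\<in>Pi\<^sub>E {..<M n} (\<lambda>_. E). a \<noteq> b \<and>
            cmod (\<Sum>i<M n. complex_of_real (J i) * (a i - b i)) \<le> 2 powr (- \<beta> * real n)}"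
        proof
          fix J assume "J \<in> {J \<in> space ?P. small_gap (2 ^ n) (M n) (h n) (2 powr (- \<beta> * real n)) J}"
          then have J: "J \<in> space ?P" "small_gap (2 ^ n) (M n) (h n) (2 powr (- \<beta> * real n)) J" by auto
          have "\<exists>a\<in>Pi\<^sub>E {..<M n} (\<lambda>_. E). \<exists>b\<in>Pi\<^sub>E {..<M n} (\<lambda>_. E). a \<noteq> b \<and>
            cmod (\<Sum>i<M n. complex_of_real (J i) * (a i - b i)) \<le> 2 powr (- \<beta> * real n)"
            by (rule gap_reduce[OF csco[OF n1] Eh[OF n1] J(2)])
          then show "J \<in> {J \<in> space ?P. \<exists>a\<in>Pi\<^sub>E {..<M n} (\<lambda>_. E). \<exists>b\<in>Pi\<^sub>E {..<M n} (\<lambda>_. E). a \<noteq> b \<and>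
            cmod (\<Sum>i<M n. complex_of_real (J i) * (a i - b i)) \<le> 2 powr (- \<beta> * real n)}"
            using J(1) by blast
        qed
        have fb: "?f n \<le> real (M n) * (fact (2 * k) / (2^k * fact k) / (R n - \<delta> n / 2) ^ (2 * k))
              + real (card E) ^ (2 * M n) * (2 * (2 powr (- \<beta> * real n)) / g + \<delta> n)"
          by (rule main_prob[OF finE gpos sep Rpos dpos Rd _ sub]) auto
        have f0: "?f n \<ge> 0" by simp
        have "real n ^ q * \<bar>?f n\<bar> \<le> C1 * (fact (2 * k) / (2^k * fact k)) * 4 ^ k / real n
            + (2 / g + C2) * real n ^ q * exp (- real n)"
          by (rule negl_bound_n[OF n1 _ _ _ _ dpos c kc C1 C2 gpos _ \<beta>K \<beta>pos fb f0])
             (use elim K_def in auto)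
        then show ?case unfolding A_def B_def mk_def by (simp add: mult_ac)
      qed
      show "eventually (\<lambda>n. real n ^ q * \<bar>?f n\<bar> < 1) at_top"
        using evkey evlim by eventually_elim linarith
    qed
    have exev: "eventually (\<lambda>n. real n powr C * real n \<le> exp (real n)) at_top" by real_asymp
    show "poly_bounded (\<lambda>n. digit_bits (M n) (R n) (\<delta> n))"
      unfolding poly_bounded_def
    proof (intro exI[of _ 2] bigoI)
      show "eventually (\<lambda>n. norm (digit_bits (M n) (R n) (\<delta> n))
              \<le> (C1 * ((\<bar>ln (2 * C1 / c2 + 1)\<bar> + \<beta> + 1) / ln 2 + 1)) * norm (real n ^ 2)) at_top"
        using ev1 evM1 evR evd2' exev eventually_ge_at_top[of 1]
      proof eventually_elim
        case (elim n)
        have "\<bar>digit_bits (M n) (R n) (\<delta> n)\<bar> \<le> C1 * ((\<bar>ln (2 * C1 / c2 + 1)\<bar> + \<beta> + 1) / ln 2 + 1) * real n ^ 2"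
          by (rule digit_bound_n[OF _ _ _ _ Rpos _ dpos c2 C1 \<beta>pos]) (use elim in auto)
        then show ?case by simp
      qed
    qed
  qed
qed

end
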